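(* Let $N=2n\ge2$ and $L\ge1$. For every $c=c_L\otimes\cdots\otimes c_1\in B^{1\otimes L}$, $$\overline D_{B^{1\otimes L}}(c)=\overline D_{B^{1\vee\otimes L}}(c^{\vee*}),\qquad\text{where } c^{\vee*}=c_L^{\vee*}\otimes\cdots\otimes c_1^{\vee*}\ \text{ and } j^{\vee*}=(N+1-j)^\vee.$$
   Context: $B^1$ is the $U_q'(A^{(1)}_{N-1})$-crystal with elements $1,\dots,N$, $f_i(i)=i+1$ ($1\le i\le N-1$), $f_0(N)=1$, all other $f_i$ zero. $B^{1\vee}$ is its dual: elements $j^\vee$, $f_i(b^\vee)=e_i(b)^\vee$ (so $f_i((i+1)^\vee)=i^\vee$, $f_0(1^\vee)=N^\vee$). Tensor products: $f_i(b_2\otimes b_1)=f_i(b_2)\otimes b_1$ if $\varepsilon_i(b_2)\ge\varphi_i(b_1)$, else $b_2\otimes f_i(b_1)$; $e_i(b_2\otimes b_1)=e_i(b_2)\otimes b_1$ if $\varepsilon_i(b_2)>\varphi_i(b_1)$, else $b_2\otimes e_i(b_1)$. For $B_0\in\{B^1,B^{1\vee}\}$ with leading element $u=1$ (resp. $u=N^\vee$), the local coenergy $H:B_0\otimes B_0\to\mathbb Z_{\ge0}$ is the unique function constant on classical components (components after deleting $0$-arrows) with $H(u\otimes u)=0$ and, whenever $e_0(x\otimes y)\ne0$, $H(e_0(x\otimes y))=H(x\otimes y)+1$ if $e_0(x\otimes y)=e_0(x)\otimes y$ and $H(x\otimes y)-1$ otherwise. The intrinsic coenergy on $B_0^{\otimes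 L}$ is $\overline D_{B_0^{\otimes L}}(b_L\otimes\cdots\otimes b_1)=\sum_{i=1}^{L-1}(L-i)\,H(b_{i+1}\otimes b_i)$. *)

theory Defs
  imports Main
begin

text \<open>For B^1 the number j is the element j; for the dual B^{1 dual} the number j
encodes the element j^dual.\<close>

definition B1_f :: "nat \<Rightarrow> nat \<Rightarrow> nat \<Rightarrow> nat option" where
  "B1_f N i b = (if 1 \<le> i \<and> i \<le> N - 1 \<and> b = i then Some (i + 1)
                 else if i = 0 \<and> b = N then Some 1 else None)"

definition B1_e :: "nat \<Rightarrow> nat \<Rightarrow> nat \<Rightarrow> nat option" where
  "B1_e N i b = (if 1 \<le> i \<and> i \<le> N - 1 \<and> b = i + 1 then Some i
                 else if i = 0 \<and> b = 1 then Some N else None)"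

text \<open>Dual crystal: f_i(b^dual) = e_i(b)^dual and e_i(b^dual) = f_i(b)^dual.\<close>
definition B1v_f :: "nat \<Rightarrow> nat \<Rightarrow> nat \<Rightarrow> nat option" where
  "B1v_f N = B1_e N"

definition B1v_e :: "nat \<Rightarrow> nat \<Rightarrow> nat \<Rightarrow> nat option" where
  "B1v_e N = B1_f N"

fun opt_iter :: "('a \<Rightarrow> 'a option) \<Rightarrow> nat \<Rightarrow> 'a \<Rightarrow> 'a option" where
  "opt_iter g 0 b = Some b"
| "opt_iter g (Suc k) b = Option.bind (opt_iter g k b) g"

definition strlen :: "('a \<Rightarrow> 'a option) \<Rightarrow> 'a \<Rightarrow> nat" where
  "strlen g b = (GREATEST k. opt_iter g k b \<noteq> None)"

text \<open>Tensor product of two crystals on pairs (b2, b1) = b2 \<otimes> b1.\<close>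
definition tens_f :: "(nat \<Rightarrow> 'a \<Rightarrow> 'a option) \<Rightarrow> (nat \<Rightarrow> 'a \<Rightarrow> 'a option)
     \<Rightarrow> nat \<Rightarrow> 'a \<times> 'a \<Rightarrow> ('a \<times> 'a) option" where
  "tens_f e f i p = (case p of (b2, b1) \<Rightarrow>
     if strlen (e i) b2 \<ge> strlen (f i) b1 then map_option (\<lambda>x. (x, b1)) (f i b2)
     else map_option (\<lambda>y. (b2, y)) (f i b1))"

definition tens_e :: "(nat \<Rightarrow> 'a \<Rightarrow> 'a option) \<Rightarrow> (nat \<Rightarrow> 'a \<Rightarrow> 'a option)
     \<Rightarrow> nat \<Rightarrow> 'a \<times> 'a \<Rightarrow> ('a \<times> 'a) option" where
  "tens_e e f i p = (case p of (b2, b1) \<Rightarrow>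
     if strlen (e i) b2 > strlen (f i) b1 then map_option (\<lambda>x. (x, b1)) (e i b2)
     else map_option (\<lambda>y. (b2, y)) (e i b1))"

text \<open>Defining properties of the local coenergy on B_0 \<otimes> B_0 (elements 1..N),
with leading element u.  H is required to vanish outside B_0 \<otimes> B_0 to make
it a unique total function.\<close>
definition is_local_coenergy ::
  "(nat \<Rightarrow> nat \<Rightarrow> nat \<Rightarrow> nat option) \<Rightarrow> (nat \<Rightarrow> nat \<Rightarrow> nat \<Rightarrow> nat option)
   \<Rightarrow> nat \<Rightarrow> nat \<Rightarrow> (nat \<times> nat \<Rightarrow> int) \<Rightarrow> bool" where
  "is_local_coenergy e f N u H \<longleftrightarrow>
     (\<forall>p. p \<notin> {1..N} \<times> {1..N} \<longrightarrow> H p = 0) \<and>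
     (\<forall>p \<in> {1..N} \<times> {1..N}. H p \<ge> 0) \<and>
     (\<forall>p \<in> {1..N} \<times> {1..N}. \<forall>i \<in> {1..N - 1}. \<forall>q.
         tens_f (e N) (f N) i p = Some q \<longrightarrow> H q = H p) \<and>
     H (u, u) = 0 \<and>
     (\<forall>x \<in> {1..N}. \<forall>y \<in> {1..N}. \<forall>q.
         tens_e (e N) (f N) 0 (x, y) = Some q \<longrightarrow>
           H q = (if e N 0 x = Some (fst q) \<and> snd q = y then H (x, y) + 1 else H (x, y) - 1))"

definition local_coenergy ::
  "(nat \<Rightarrow> nat \<Rightarrow> nat \<Rightarrow> nat option) \<Rightarrow> (nat \<Rightarrow> nat \<Rightarrow> nat \<Rightarrow> nat option)
   \<Rightarrow> nat \<Rightarrow> nat \<Rightarrow> nat \<times> nat \<Rightarrow> int" where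
  "local_coenergy e f N u = (THE H. is_local_coenergy e f N u H)"

definition H_B1 :: "nat \<Rightarrow> nat \<times> nat \<Rightarrow> int" where
  "H_B1 N = local_coenergy B1_e B1_f N 1"

definition H_B1v :: "nat \<Rightarrow> nat \<times> nat \<Rightarrow> int" where
  "H_B1v N = local_coenergy B1v_e B1v_f N N"

text \<open>Intrinsic coenergy of b_L \<otimes> ... \<otimes> b_1, given as b :: nat \<Rightarrow> _ with b i = b_i.\<close>
definition intrinsic_coenergy :: "(nat \<times> nat \<Rightarrow> int) \<Rightarrow> nat \<Rightarrow> (nat \<Rightarrow> nat) \<Rightarrow> int" where
  "intrinsic_coenergy H L b = (\<Sum>i = 1..L - 1. int (L - i) * H (b (i + 1), b i))"

end

theory Submission
  imports Defs
begin

lemma oi1: "g b = None \<Longrightarrow> opt_iter g (Suc j) b = None"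
  by (induction j) auto
lemma oi2: "g b = Some b' \<Longrightarrow> g b' = None \<Longrightarrow> opt_iter g (Suc (Suc j)) b = None"
  by (induction j) auto

lemma strlen0: assumes "g b = None" shows "strlen g b = 0"
  unfolding strlen_def
proof (rule Greatest_equality)
  show "opt_iter g 0 b \<noteq> None" by simp
  fix y assume "opt_iter g y b \<noteq> None"
  then show "y \<le> 0" using oi1[of g b] assms by (cases y) auto
qed

lemma strlen1: assumes "g b = Some b'" "g b' = None" shows "strlen g b = 1"
  unfolding strlen_def
proof (rule Greatest_equality)
  show "opt_iter g 1 b \<noteq> None" using assms by simp
  fix y assume "opt_iter g y b \<noteq> None"
  then show "y \<le> 1" using oi2[of g b] assms by (cases y; cases "y - 1") auto
qed

lemma eps_B1: assumes "N \<ge> 2" shows "strlen (B1_e N i) b =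
  (if (1 \<le> i \<and> i \<le> N - 1 \<and> b = i + 1) \<or> (i = 0 \<and> b = 1) then 1 else 0)"
proof (cases "B1_e N i b")
  case None then show ?thesis using strlen0[of "B1_e N i" b] by (simp add: B1_e_def split: if_splits)
next
  case (Some b') then have "B1_e N i b' = None" using assms by (auto simp: B1_e_def split: if_splits)
  then show ?thesis using strlen1[of "B1_e N i" b b'] Some by (simp add: B1_e_def split: if_splits)
qed

lemma phi_B1: assumes "N \<ge> 2" shows "strlen (B1_f N i) b =
  (if (1 \<le> i \<and> i \<le> N - 1 \<and> b = i) \<or> (i = 0 \<and> b = N) then 1 else 0)"
proof (cases "B1_f N i b")
  case None then show ?thesis using strlen0[of "B1_f N i" b] by (simp add: B1_f_def split: if_splits)
next
  case (Some b') then have "B1_f N i b' = None" using assms by (auto simp: B1_f_def split: if_splits)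
  then show ?thesis using strlen1[of "B1_f N i" b b'] Some by (simp add: B1_f_def split: if_splits)
qed

lemma tfA: assumes "N \<ge> 2" "1 \<le> i" "i \<le> N - 1"
  shows "tens_f (B1_e N) (B1_f N) i (x, y) = (if x = i+1 then None else if y = i then Some (x, i+1)
     else if x = i then Some (i+1, y) else None)"
  using assms by (simp add: tens_f_def eps_B1 phi_B1 B1_f_def)

lemma teA: assumes "N \<ge> 2"
  shows "tens_e (B1_e N) (B1_f N) 0 (x, y) = (if x = 1 \<and> y \<noteq> N then Some (N, y) else if y = 1 then Some (x, N) else None)"
  using assms by (simp add: tens_e_def eps_B1 phi_B1 B1_e_def)

lemma tfV: assumes "N \<ge> 2" "1 \<le> i" "i \<le> N - 1"
  shows "tens_f (B1_f N) (B1_e N) i (x, y) = (if x \<noteq> i \<and> y = i+1 then Some (x, i) else if x = i+1 then Some (i, y) else None)"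
  using assms by (simp add: tens_f_def eps_B1 phi_B1 B1_e_def)

lemma teV: assumes "N \<ge> 2"
  shows "tens_e (B1_f N) (B1_e N) 0 (x, y) = (if x = N \<and> y \<noteq> 1 then Some (1, y) else if y = N then Some (x, 1) else None)"
  using assms by (simp add: tens_e_def eps_B1 phi_B1 B1_f_def)

definition HA :: "nat \<Rightarrow> nat \<times> nat \<Rightarrow> int" where
  "HA N p = (if fst p \<in> {1..N} \<and> snd p \<in> {1..N} \<and> fst p > snd p then 1 else 0)"
definition HV :: "nat \<Rightarrow> nat \<times> nat \<Rightarrow> int" where
  "HV N p = (if fst p \<in> {1..N} \<and> snd p \<in> {1..N} \<and> fst p < snd p then 1 else 0)"

lemma HA_ok: assumes "N \<ge> 2" shows "is_local_coenergy B1_e B1_f N 1 (HA N)"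
  unfolding is_local_coenergy_def
proof (intro conjI)
  show "\<forall>p\<in>{1..N} \<times> {1..N}. \<forall>i\<in>{1..N - 1}. \<forall>q. tens_f (B1_e N) (B1_f N) i p = Some q \<longrightarrow> HA N q = HA N p"
    using assms by (auto simp: tfA HA_def split: if_splits)
  show "\<forall>x\<in>{1..N}. \<forall>y\<in>{1..N}. \<forall>q. tens_e (B1_e N) (B1_f N) 0 (x, y) = Some q \<longrightarrow>
        HA N q = (if B1_e N 0 x = Some (fst q) \<and> snd q = y then HA N (x, y) + 1 else HA N (x, y) - 1)"
    using assms by (auto simp: teA B1_e_def HA_def split: if_splits)
qed (auto simp: HA_def)

lemma HV_ok: assumes "N \<ge> 2" shows "is_local_coenergy B1v_e B1v_f N N (HV N)"
  unfolding is_local_coenergy_def B1v_e_def B1v_f_def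
proof (intro conjI)
  show "\<forall>p\<in>{1..N} \<times> {1..N}. \<forall>i\<in>{1..N - 1}. \<forall>q. tens_f (B1_f N) (B1_e N) i p = Some q \<longrightarrow> HV N q = HV N p"
    using assms by (auto simp: tfV HV_def split: if_splits)
  show "\<forall>x\<in>{1..N}. \<forall>y\<in>{1..N}. \<forall>q. tens_e (B1_f N) (B1_e N) 0 (x, y) = Some q \<longrightarrow>
        HV N q = (if B1_f N 0 x = Some (fst q) \<and> snd q = y then HV N (x, y) + 1 else HV N (x, y) - 1)"
    using assms by (auto simp: teV B1_f_def HV_def split: if_splits)
qed (auto simp: HV_def)

lemma HA_unique: assumes N: "N \<ge> 2" and H: "is_local_coenergy B1_e B1_f N 1 H" shows "H = HA N"
proof -
  have out: "\<And>p. p \<notin> {1..N} \<times> {1..N} \<Longrightarrow> H p = 0"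
    and cl: "\<And>p i q. p \<in> {1..N} \<times> {1..N} \<Longrightarrow> i \<in> {1..N - 1} \<Longrightarrow> tens_f (B1_e N) (B1_f N) i p = Some q \<Longrightarrow> H q = H p"
    and h11: "H (1,1) = 0"
    and e0: "\<And>x y q. x \<in> {1..N} \<Longrightarrow> y \<in> {1..N} \<Longrightarrow> tens_e (B1_e N) (B1_f N) 0 (x, y) = Some q \<Longrightarrow>
           H q = (if B1_e N 0 x = Some (fst q) \<and> snd q = y then H (x, y) + 1 else H (x, y) - 1)"
    using H unfolding is_local_coenergy_def by blast+
  have s1: "H (x, y+1) = H (x, y)" if "1 \<le> x" "x \<le> y" "y < N" for x y
    using cl[of "(x,y)" y "(x,y+1)"] that N by (simp add: tfA)
  have s2: "H (x+1, x+1) = H (x, x+1)" if "1 \<le> x" "x < N" for x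
    using cl[of "(x,x+1)" x "(x+1,x+1)"] that N by (simp add: tfA)
  have s3: "H (x, y+1) = H (x, y)" if "1 \<le> y" "y + 1 < x" "x \<le> N" for x y
    using cl[of "(x,y)" y "(x,y+1)"] that N by (simp add: tfA)
  have s4: "H (x+1, y) = H (x, y)" if "1 \<le> y" "y < x" "x < N" for x y
    using cl[of "(x,y)" x "(x+1,y)"] that N by (simp add: tfA)
  have hN1: "H (N, 1) = 1"
    using e0[of 1 1 "(N,1)"] N h11 by (simp add: teA B1_e_def)
  have diag: "k < N \<Longrightarrow> H (k+1, k+1) = 0" for k
  proof (induction k)
    case 0 then show ?case using h11 by simp
  next
    case (Suc k) then show ?case using s1[of "k+1" "k+1"] s2[of "k+1"] by simp
  qed
  have up: "x \<ge> 1 \<Longrightarrow> x + k \<le> N \<Longrightarrow> H (x, x+k) = 0" for x k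
  proof (induction k)
    case 0 then show ?case using diag[of "x-1"] by simp
  next
    case (Suc k) then show ?case using s1[of x "x+k"] by simp
  qed
  have col: "k + 2 \<le> N \<Longrightarrow> H (k+2, 1) = H (2, 1)" for k
  proof (induction k)
    case 0 then show ?case by (simp add: numeral_2_eq_2)
  next
    case (Suc k) then show ?case using s4[of 1 "k+2"] by simp
  qed
  have h21: "H (2,1) = 1" proof - have "N - 2 + 2 = N" using N by simp then show ?thesis using col[of "N-2"] hN1 by simp qed
  have low: "1 + k < x \<Longrightarrow> x \<le> N \<Longrightarrow> H (x, 1+k) = 1" for x k
  proof (induction k)
    case 0 then have e: "x - 2 + 2 = x" by simp show ?case using col[of "x-2", unfolded e] h21 0 by simp
  next
    case (Suc k) then show ?case using s3[of "1+k" x] by simp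
  qed
  show ?thesis
  proof
    fix p :: "nat \<times> nat"
    obtain x y where p: "p = (x,y)" by fastforce
    show "H p = HA N p"
    proof (cases "p \<in> {1..N} \<times> {1..N}")
      case False then show ?thesis using out[OF False] by (auto simp: HA_def p)
    next
      case True
      show ?thesis
      proof (cases "x \<le> y")
        case True then show ?thesis using up[of x "y-x"] \<open>p \<in> _\<close> by (simp add: HA_def p)
      next
        case False then show ?thesis using low[of "y-1" x] \<open>p \<in> _\<close> by (simp add: HA_def p)
      qed
    qed
  qed
qed

lemma HV_unique: assumes N: "N \<ge> 2" and H: "is_local_coenergy B1v_e B1v_f N N H" shows "H = HV N"
proof -
  have out: "\<And>p. p \<notin> {1..N} \<times> {1..N} \<Longrightarrow> H p = 0"
    and cl: "\<And>p i q. p \<in> {1..N} \<times> {1..N} \<Longrightarrow> i \<in> {1..N - 1} \<Longrightarrow> tens_f (B1_f N) (B1_e N) i p = Some q \<Longrightarrow> H q = H p"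
    and hNN: "H (N,N) = 0"
    and e0: "\<And>x y q. x \<in> {1..N} \<Longrightarrow> y \<in> {1..N} \<Longrightarrow> tens_e (B1_f N) (B1_e N) 0 (x, y) = Some q \<Longrightarrow>
           H q = (if B1_f N 0 x = Some (fst q) \<and> snd q = y then H (x, y) + 1 else H (x, y) - 1)"
    using H unfolding is_local_coenergy_def B1v_e_def B1v_f_def by blast+
  have t1: "H (x, i) = H (x, i+1)" if "1 \<le> i" "i < N" "x \<noteq> i" "1 \<le> x" "x \<le> N" for x i
    using cl[of "(x,i+1)" i "(x,i)"] that N by (simp add: tfV)
  have t2: "H (i, y) = H (i+1, y)" if "1 \<le> i" "i < N" "y \<noteq> i+1" "1 \<le> y" "y \<le> N" for y i
    using cl[of "(i+1,y)" i "(i,y)"] that N by (simp add: tfV)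
  have h1N: "H (1, N) = 1"
    using e0[of N N "(1,N)"] N hNN by (simp add: teV B1_f_def)
  have diag: "1 \<le> i \<Longrightarrow> i + k = N \<Longrightarrow> H (i, i) = 0" for i k
  proof (induction k arbitrary: i)
    case 0 then show ?case using hNN by simp
  next
    case (Suc k) then show ?case using t2[of i i] t1[of i "i+1"] Suc.IH[of "i+1"] by simp
  qed
  have below: "1 \<le> y \<Longrightarrow> y + k = x \<Longrightarrow> x \<le> N \<Longrightarrow> H (x, y) = 0" for x y k
  proof (induction k arbitrary: y)
    case 0 then show ?case using diag[of y "N - y"] by simp
  next
    case (Suc k) then show ?case using t1[of y x] Suc.IH[of "y+1"] by simp
  qed
  have rc: "2 \<le> y \<Longrightarrow> y + k = N \<Longrightarrow> H (1, y) = 1" for y k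
  proof (induction k arbitrary: y)
    case 0 then show ?case using h1N by simp
  next
    case (Suc k) then show ?case using t1[of y 1] Suc.IH[of "y+1"] by simp
  qed
  have upper: "1 + k < y \<Longrightarrow> y \<le> N \<Longrightarrow> H (1 + k, y) = 1" for y k
  proof (induction k)
    case 0 then show ?case using rc[of y "N - y"] by simp
  next
    case (Suc k) then show ?case using t2[of "1+k" y] by simp
  qed
  show ?thesis
  proof
    fix p :: "nat \<times> nat"
    obtain x y where p: "p = (x,y)" by fastforce
    show "H p = HV N p"
    proof (cases "p \<in> {1..N} \<times> {1..N}")
      case False then show ?thesis using out[OF False] by (auto simp: HV_def p)
    next
      case True
      show ?thesis
      proof (cases "y \<le> x")
        case True then show ?thesis using below[of y "x-y" x] \<open>p \<in> _\<close> by (simp add: HV_def p)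
      next
        case False then show ?thesis using upper[of "x-1" y] \<open>p \<in> _\<close> by (simp add: HV_def p)
      qed
    qed
  qed
qed

lemma H_B1_eq: "N \<ge> 2 \<Longrightarrow> H_B1 N = HA N"
  unfolding H_B1_def local_coenergy_def
  using HA_ok HA_unique by (intro the_equality) auto

lemma H_B1v_eq: "N \<ge> 2 \<Longrightarrow> H_B1v N = HV N"
  unfolding H_B1v_def local_coenergy_def
  using HV_ok HV_unique by (intro the_equality) auto

theorem proposition42:
  fixes n L :: nat and c :: "nat \<Rightarrow> nat"
  assumes "n \<ge> 1" and "L \<ge> 1"
    and "\<forall>i \<in> {1..L}. c i \<in> {1..2 * n}"
  shows "intrinsic_coenergy (H_B1 (2 * n)) L c
         = intrinsic_coenergy (H_B1v (2 * n)) L (\<lambda>i. 2 * n + 1 - c i)"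
proof -
  have N: "2 * n \<ge> 2" using assms(1) by simp
  show ?thesis
    unfolding intrinsic_coenergy_def H_B1_eq[OF N] H_B1v_eq[OF N]
  proof (rule sum.cong)
    fix i assume i: "i \<in> {1..L - 1}"
    then have "c i \<in> {1..2*n}" "c (i+1) \<in> {1..2*n}" using assms(3) by auto
    then show "int (L - i) * HA (2 * n) (c (i + 1), c i) =
               int (L - i) * HV (2 * n) (2 * n + 1 - c (i + 1), 2 * n + 1 - c i)"
      by (auto simp: HA_def HV_def)
  qed simp
qed

end
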